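(* Assume $k_{+\infty}=k_{-\infty}=:k_\infty$ and $k^2(x)\le k_\infty^2$ for all $x$. Let $\chi=\sqrt{k_\infty^2-k^2}$, and suppose $\chi$ is continuous and piecewise continuously differentiable and there is $x_0$ such that $\chi$ is nondecreasing on $(-\infty,x_0]$ and nonincreasing on $[x_0,\infty)$ (a single-hump barrier). Then $$T\ \ge\ \mathrm{sech}^2\left\{\frac{\max_x\sqrt{k_\infty^2-k^2(x)}}{k_\infty}+\int_{-\infty}^{\infty}\sqrt{k_\infty^2-k^2}\;\mathrm{d}x\right\}.$$ In quantum-mechanical notation, with $k^2=2m(E-V)/\hbar^2$, $V\ge0$, $V\to0$ at $\pm\infty$, $E>0$ and $V$ single-humped with maximum $V_{\max}$, this reads $T\ge\mathrm{sech}^2\{\sqrt{V_{\max}/E}+\int_{-\infty}^{\infty}\sqrt{2mV}/\hbar\,\mathrm{d}x\}$.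
   Context: Standing setup: $k^2:\mathbb{R}\to\mathbb{R}$ is a piecewise continuous function with $k^2(x)\to k_{\pm\infty}^2$ as $x\to\pm\infty$, where $k_{\pm\infty}>0$ and $k^2-k_{\pm\infty}^2$ is integrable near $\pm\infty$. For the equation $u''+k^2(x)u=0$ there is a solution with $u(x)=e^{ik_{-\infty}x}+r\,e^{-ik_{-\infty}x}+o(1)$ as $x\to-\infty$ and $u(x)=\tau\,e^{ik_{+\infty}x}+o(1)$ as $x\to+\infty$; the transmission probability is $T=(k_{+\infty}/k_{-\infty})|\tau|^2$. Here $\mathrm{sech}=1/\cosh$, and if the integral equals $+\infty$ the bound is read as the trivial statement $T\ge 0$. *)

theory Defs
  imports "HOL-Analysis.Analysis"
begin

definition sech :: "real \<Rightarrow> real" where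
  "sech x = 1 / cosh x"

definition piecewise_continuous :: "(real \<Rightarrow> real) \<Rightarrow> bool" where
  "piecewise_continuous f \<longleftrightarrow>
     (\<forall>a b. finite {x \<in> {a..b}. \<not> isCont f x}) \<and>
     (\<forall>x. (\<exists>l. (f \<longlongrightarrow> l) (at_left x)) \<and> (\<exists>l. (f \<longlongrightarrow> l) (at_right x)))"

definition is_solution :: "(real \<Rightarrow> real) \<Rightarrow> (real \<Rightarrow> complex) \<Rightarrow> bool" where
  "is_solution q u \<longleftrightarrow>
     (\<exists>u'. (\<forall>x. (u has_vector_derivative u' x) (at x)) \<and> continuous_on UNIV u' \<and>
           (\<forall>x. isCont q x \<longrightarrow>
                 (u' has_vector_derivative (- (complex_of_real (q x) * u x))) (at x)))"

end

theory Submission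
  imports Defs
begin


lemma key_ineq:
  fixes h c dc X Y X' Y' :: real
  assumes h: "h > 0" and c: "c \<ge> 0"
  shows "\<bar>dc * ((X\<^sup>2+Y\<^sup>2) - (X'\<^sup>2+Y'\<^sup>2)/h\<^sup>2) + 4*c*(X*X'+Y*Y')\<bar>
     \<le> (\<bar>dc\<bar>/h + 2*c) * sqrt ((h*(X\<^sup>2+Y\<^sup>2) + (X'\<^sup>2+Y'\<^sup>2)/h)\<^sup>2 - 4*(X*Y'-Y*X')\<^sup>2)"
proof -
  define A where "A = h*(X\<^sup>2+Y\<^sup>2) - (X'\<^sup>2+Y'\<^sup>2)/h"
  define B where "B = 2*(X*X'+Y*Y')"
  have id: "(h*(X\<^sup>2+Y\<^sup>2) + (X'\<^sup>2+Y'\<^sup>2)/h)\<^sup>2 - 4*(X*Y'-Y*X')\<^sup>2 = A\<^sup>2 + B\<^sup>2"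
    unfolding A_def B_def using h by (simp add: field_simps power2_eq_square)
  have e: "dc * ((X\<^sup>2+Y\<^sup>2) - (X'\<^sup>2+Y'\<^sup>2)/h\<^sup>2) + 4*c*(X*X'+Y*Y') = (dc/h)*A + 2*c*B"
    unfolding A_def B_def using h by (simp add: field_simps power2_eq_square)
  have sA: "\<bar>A\<bar> \<le> sqrt (A\<^sup>2+B\<^sup>2)" by (metis real_sqrt_abs real_sqrt_le_mono le_add_same_cancel1 zero_le_power2)
  have sB: "\<bar>B\<bar> \<le> sqrt (A\<^sup>2+B\<^sup>2)" by (metis real_sqrt_abs real_sqrt_le_mono le_add_same_cancel2 zero_le_power2)
  have "\<bar>(dc/h)*A + 2*c*B\<bar> \<le> \<bar>dc/h\<bar>*\<bar>A\<bar> + 2*c*\<bar>B\<bar>"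
    using c abs_triangle_ineq[of "(dc/h)*A" "2*c*B"] by (simp add: abs_mult)
  also have "\<dots> \<le> \<bar>dc/h\<bar>* sqrt (A\<^sup>2+B\<^sup>2) + 2*c* sqrt (A\<^sup>2+B\<^sup>2)"
    using sA sB c by (intro add_mono mult_left_mono) auto
  finally show ?thesis unfolding e id using h by (simp add: abs_divide algebra_simps)
qed

lemma F_sq_ge:
  fixes h X Y X' Y' :: real
  assumes h: "h > 0"
  shows "4*(X*Y'-Y*X')\<^sup>2 \<le> (h*(X\<^sup>2+Y\<^sup>2) + (X'\<^sup>2+Y'\<^sup>2)/h)\<^sup>2"
proof -
  have "(h*(X\<^sup>2+Y\<^sup>2) + (X'\<^sup>2+Y'\<^sup>2)/h)\<^sup>2 - 4*(X*Y'-Y*X')\<^sup>2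
     = (h*(X\<^sup>2+Y\<^sup>2) - (X'\<^sup>2+Y'\<^sup>2)/h)\<^sup>2 + (2*(X*X'+Y*Y'))\<^sup>2"
    using h by (simp add: field_simps power2_eq_square)
  moreover have "0 \<le> (h*(X\<^sup>2+Y\<^sup>2) - (X'\<^sup>2+Y'\<^sup>2)/h)\<^sup>2 + (2*(X*X'+Y*Y'))\<^sup>2" by simp
  ultimately show ?thesis by linarith
qed

lemma mono_finite_exc:
  fixes g g' :: "real \<Rightarrow> real"
  assumes "a \<le> b" "finite S" "continuous_on {a..b} g"
    and "\<And>x. x \<in> {a<..<b} - S \<Longrightarrow> (g has_real_derivative g' x) (at x)"
    and "\<And>x. x \<in> {a<..<b} - S \<Longrightarrow> g' x \<ge> 0"
  shows "g a \<le> g b"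
proof -
  define f where "f x = (if x \<in> {a<..<b} - S then g' x else 0)" for x
  have "(f has_integral (g b - g a)) {a..b}"
  proof (rule fundamental_theorem_of_calculus_interior_strong[OF assms(2,1) _ assms(3)])
    fix x assume x: "x \<in> {a<..<b} - S"
    then show "(g has_vector_derivative f x) (at x)"
      using assms(4)[OF x] by (simp add: f_def has_real_derivative_iff_has_vector_derivative)
  qed
  moreover have "\<And>x. x \<in> {a..b} \<Longrightarrow> 0 \<le> f x" using assms(5) by (simp add: f_def)
  ultimately have "0 \<le> g b - g a" by (rule has_integral_nonneg)
  then show ?thesis by simp
qed

lemma core_mono:
  fixes X Y X1 Y1 chi dchi :: "real \<Rightarrow> real" and k e W0 sg c d :: real
  assumes k: "k > 0" and e: "e > 0" and cd: "c \<le> d" and sg: "sg = 1 \<or> sg = -1"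
    and dX: "\<And>x. (X has_real_derivative X1 x) (at x)"
    and dY: "\<And>x. (Y has_real_derivative Y1 x) (at x)"
    and dX1: "\<And>x. (X1 has_real_derivative (- ((k\<^sup>2 - (chi x)\<^sup>2) * X x))) (at x)"
    and dY1: "\<And>x. (Y1 has_real_derivative (- ((k\<^sup>2 - (chi x)\<^sup>2) * Y x))) (at x)"
    and W: "\<And>x. X x * Y1 x - Y x * X1 x = W0"
    and chic: "continuous_on UNIV chi" and chipos: "\<And>x. chi x \<ge> 0"
    and T: "finite T"
    and dchi: "\<And>x. x \<in> {c<..<d} - T \<Longrightarrow> (chi has_real_derivative dchi x) (at x)"
    and sgn: "\<And>x. x \<in> {c<..<d} - T \<Longrightarrow> sg * dchi x \<ge> 0"
  defines "F \<equiv> \<lambda>x. (k + chi x)*((X x)\<^sup>2+(Y x)\<^sup>2) + ((X1 x)\<^sup>2+(Y1 x)\<^sup>2)/(k + chi x)"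
  defines "Psi \<equiv> \<lambda>x. F x + sqrt ((F x)\<^sup>2 - 4*W0\<^sup>2 + e)"
  shows "ln (Psi c) + sg * ln (k + chi c) + 2 * integral {c..c} chi
       \<le> ln (Psi d) + sg * ln (k + chi d) + 2 * integral {c..d} chi"
proof -
  have hpos: "k + chi x > 0" for x using k chipos[of x] by linarith
  have Dpos: "(F x)\<^sup>2 - 4*W0\<^sup>2 + e > 0" for x
    using F_sq_ge[OF hpos[of x], where X="X x" and Y="Y x" and X'="X1 x" and Y'="Y1 x"] W[of x] e unfolding F_def by simp
  have Fsq: "4*W0\<^sup>2 \<le> (F x)\<^sup>2" for x
    using F_sq_ge[OF hpos[of x], where X="X x" and Y="Y x" and X'="X1 x" and Y'="Y1 x"] W[of x] unfolding F_def by simp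
  have Fnn: "F x \<ge> 0" for x unfolding F_def using hpos[of x] k chipos[of x] by (intro add_nonneg_nonneg mult_nonneg_nonneg divide_nonneg_pos) auto
  have sqgt: "sqrt ((F x)\<^sup>2 - 4*W0\<^sup>2 + e) > 0" for x
    using Dpos[of x] by simp
  have Psipos: "Psi x > 0" for x using sqgt[of x] Fnn[of x] unfolding Psi_def by linarith
  have contX: "continuous_on UNIV X" "continuous_on UNIV Y" "continuous_on UNIV X1" "continuous_on UNIV Y1"
    using dX dY dX1 dY1 by (meson DERIV_isCont continuous_at_imp_continuous_on)+
  have contF: "continuous_on UNIV F"
    unfolding F_def using hpos
    by (intro continuous_intros contX chic) (auto simp: less_imp_neq[symmetric])
  have contL: "continuous_on {c..d} (\<lambda>x. ln (Psi x) + sg * ln (k + chi x) + 2 * integral {c..x} chi)"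
  proof (intro continuous_intros)
    show "continuous_on {c..d} Psi" unfolding Psi_def
      by (intro continuous_intros continuous_on_subset[OF contF]) auto
    show "continuous_on {c..d} chi" by (rule continuous_on_subset[OF chic]) auto
    show "continuous_on {c..d} (\<lambda>x. integral {c..x} chi)"
      by (rule indefinite_integral_continuous_1) (rule integrable_continuous_real, rule continuous_on_subset[OF chic], auto)
  qed (metis Psipos hpos less_irrefl)+
  show ?thesis
  proof (rule mono_finite_exc[OF cd T contL])
    fix x assume x: "x \<in> {c<..<d} - T"
    define h where "h = k + chi x"
    define Fd where "Fd = dchi x * (((X x)\<^sup>2+(Y x)\<^sup>2) - ((X1 x)\<^sup>2+(Y1 x)\<^sup>2)/h\<^sup>2) + 4*chi x*(X x*X1 x+Y x*Y1 x)"
    have dF: "(F has_real_derivative Fd) (at x)"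
    proof -
      have hh: "k * k + (chi x * chi x + k * (chi x * 2)) \<noteq> 0"
      proof -
        have "k * k + (chi x * chi x + k * (chi x * 2)) = (k+chi x)*(k+chi x)" by algebra
        then show ?thesis using hpos[of x] by simp
      qed
      show ?thesis unfolding F_def
      using hpos[of x]
      apply (auto intro!: derivative_eq_intros dX dY dX1 dY1 dchi[OF x] simp: Fd_def h_def)
      using hh apply (simp add: field_simps power2_eq_square)
      done
    qed
    define s where "s = sqrt ((F x)\<^sup>2 - 4*W0\<^sup>2 + e)"
    have spos: "s > 0" using sqgt[of x] by (simp add: s_def)
    have dPsi: "(Psi has_real_derivative Fd * (1 + F x / s)) (at x)"
      unfolding Psi_def using Dpos[of x]
      by (auto intro!: derivative_eq_intros dF simp: s_def field_simps)
    have dI: "((\<lambda>x. integral {c..x} chi) has_real_derivative chi x) (at x)"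
    proof -
      have "((\<lambda>u. integral {c..u} chi) has_vector_derivative chi x) (at x within {c..d})"
        by (rule integral_has_vector_derivative) (use x continuous_on_subset[OF chic] in auto)
      moreover have "at x within {c..d} = at x" using x by (intro at_within_Icc_at) auto
      ultimately show ?thesis by (simp add: has_real_derivative_iff_has_vector_derivative)
    qed
    have eq: "Fd * (1 + F x / s) / Psi x = Fd / s"
    proof -
      have p: "Psi x = F x + s" unfolding Psi_def s_def ..
      have "1 + F x / s = (F x + s) / s" using spos by (simp add: field_simps)
      then show ?thesis using p Psipos[of x] spos by simp
    qed
    show "((\<lambda>x. ln (Psi x) + sg * ln (k + chi x) + 2 * integral {c..x} chi) has_real_derivative
       (Fd / sqrt ((F x)\<^sup>2 - 4*W0\<^sup>2 + e) + sg * dchi x / h + 2 * chi x)) (at x)"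
      unfolding s_def[symmetric] eq[symmetric] h_def
      using Psipos[of x] hpos[of x]
      by (auto intro!: derivative_eq_intros dPsi dI dchi[OF x])
    show "Fd / sqrt ((F x)\<^sup>2 - 4*W0\<^sup>2 + e) + sg * dchi x / h + 2 * chi x \<ge> 0"
    proof -
      have hp: "h > 0" using hpos[of x] by (simp add: h_def)
      have K: "\<bar>Fd\<bar> \<le> (\<bar>dchi x\<bar>/h + 2*chi x) * sqrt ((F x)\<^sup>2 - 4*W0\<^sup>2)"
        using key_ineq[OF hp chipos[of x], where dc="dchi x" and X="X x" and Y="Y x" and X'="X1 x" and Y'="Y1 x"]
          W[of x] unfolding Fd_def F_def h_def by simp
      have "sqrt ((F x)\<^sup>2 - 4*W0\<^sup>2) \<le> s" unfolding s_def using e by simp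
      then have "(\<bar>dchi x\<bar>/h + 2*chi x) * sqrt ((F x)\<^sup>2 - 4*W0\<^sup>2) \<le> (\<bar>dchi x\<bar>/h + 2*chi x) * s"
        using hp chipos[of x] by (intro mult_left_mono) auto
      with K have K2: "\<bar>Fd\<bar> / s \<le> \<bar>dchi x\<bar>/h + 2*chi x" using spos by (simp add: divide_le_eq)
      have "sg * dchi x = \<bar>dchi x\<bar>" using sg sgn[OF x] by auto
      then have "sg * dchi x / h = \<bar>dchi x\<bar>/h" by simp
      moreover have "- (\<bar>Fd\<bar> / s) \<le> Fd / s" using spos
        by (metis abs_divide abs_ge_minus_self abs_of_pos minus_le_iff)
      ultimately show ?thesis using K2 unfolding s_def by linarith
    qed
  qed
qed



lemma mult_zero_bdd:
  fixes f g :: "'b \<Rightarrow> 'a::real_normed_algebra"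
  assumes "(f \<longlongrightarrow> 0) F" "\<And>x. norm (g x) \<le> B"
  shows "((\<lambda>x. f x * g x) \<longlongrightarrow> 0) F"
proof (rule tendsto_0_le[OF assms(1), where K=B])
  show "\<forall>\<^sub>F x in F. norm (f x * g x) \<le> norm (f x) * B"
    using assms(2) by (intro always_eventually allI order.trans[OF norm_mult_ineq] mult_left_mono) auto
qed

lemma mult_zero_bdd':
  fixes f g :: "'b \<Rightarrow> 'a::real_normed_algebra"
  assumes "(f \<longlongrightarrow> 0) F" "\<And>x. norm (g x) \<le> B"
  shows "((\<lambda>x. g x * f x) \<longlongrightarrow> 0) F"
proof (rule tendsto_0_le[OF assms(1), where K=B])
  show "\<forall>\<^sub>F x in F. norm (g x * f x) \<le> norm (f x) * B"
    using assms(2) by (intro always_eventually allI order.trans[OF norm_mult_ineq])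
      (metis mult.commute mult_left_mono norm_ge_zero)
qed

lemma deriv_bound_pt:
  fixes v v' v'' :: "real \<Rightarrow> complex"
  assumes d1: "\<And>t. (v has_vector_derivative v' t) (at t)"
    and d2: "\<And>t. (v' has_vector_derivative v'' t) (at t)"
    and b: "\<And>t. t \<in> {x..x+1} \<Longrightarrow> norm (v t) \<le> e \<and> norm (v'' t) \<le> e"
  shows "norm (v' x) \<le> 3 * e"
proof -
  have c1: "continuous_on S v" for S using d1
    by (meson continuous_at_imp_continuous_on has_vector_derivative_continuous)
  have c2: "continuous_on S v'" for S using d2
    by (meson continuous_at_imp_continuous_on has_vector_derivative_continuous)
  have e0: "e \<ge> 0" using b[of x] by (meson atLeastAtMost_iff less_eq_real_def less_add_one norm_ge_zero order_trans)
  have L: "norm (v' t - v' x) \<le> e" if t: "t \<in> {x..x+1}" for t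
  proof (cases "t = x")
    case False
    with t have xt: "x < t" by auto
    have "norm (v' t - v' x) \<le> e * t - e * x"
    proof (rule differentiable_bound_general[OF xt c2, of "\<lambda>s. e * s" v'' "\<lambda>_. e"])
      show "continuous_on {x..t} ((*) e)" by (intro continuous_intros)
      show "(v' has_vector_derivative v'' s) (at s)" for s by (rule d2)
      show "((*) e has_vector_derivative e) (at s)" for s
        unfolding has_real_derivative_iff_has_vector_derivative[symmetric] by (auto intro!: derivative_eq_intros)
      show "norm (v'' s) \<le> e" if "x < s" "s < t" for s using b[of s] that t by auto
    qed
    also have "\<dots> = e * (t - x)" by (simp add: algebra_simps)
    also have "\<dots> \<le> e" using t e0 by (intro mult_left_le) auto
    finally show ?thesis .
  qed (use e0 in simp)
  define g where "g s = v s - s *\<^sub>R v' x" for s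
  have "norm (g (x+1) - g x) \<le> e * (x+1) - e * x"
  proof (rule differentiable_bound_general[of x "x+1" g "\<lambda>s. e * s" "\<lambda>s. v' s - v' x" "\<lambda>_. e"])
    show "continuous_on {x..x + 1} g" unfolding g_def by (intro continuous_intros c1)
    show "continuous_on {x..x+1} ((*) e)" by (intro continuous_intros)
    show "(g has_vector_derivative v' s - v' x) (at s)" for s unfolding g_def
      by (rule has_vector_derivative_diff[OF d1]) (rule has_vector_derivative_eq_rhs, (rule derivative_intros)+, simp)
    show "((*) e has_vector_derivative e) (at s)" for s
      unfolding has_real_derivative_iff_has_vector_derivative[symmetric] by (auto intro!: derivative_eq_intros)
    show "norm (v' s - v' x) \<le> e" if "x < s" "s < x+1" for s using L[of s] that by auto
  qed simp
  then have G: "norm (v (x+1) - v x - v' x) \<le> e" unfolding g_def by (simp add: algebra_simps scaleR_add_left)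
  have "norm (v' x) \<le> norm (v (x+1) - v x) + norm (v (x+1) - v x - v' x)"
    using norm_triangle_ineq4[of "v (x+1) - v x" "v (x+1) - v x - v' x"] by simp
  also have "\<dots> \<le> norm (v (x+1)) + norm (v x) + norm (v (x+1) - v x - v' x)"
    using norm_triangle_ineq4[of "v (x+1)" "v x"] by linarith
  also have "\<dots> \<le> e + e + e" using G b[of x] b[of "x+1"] by (intro add_mono) auto
  finally show ?thesis by simp
qed

lemma ev_shift_top: "eventually P at_top \<Longrightarrow> eventually (\<lambda>x. \<forall>t\<in>{x..x+1}. P t) (at_top::real filter)"
  unfolding eventually_at_top_linorder by (metis atLeastAtMost_iff order_trans)

lemma ev_shift_bot: "eventually P at_bot \<Longrightarrow> eventually (\<lambda>x. \<forall>t\<in>{x..x+1}. P t) (at_bot::real filter)"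
  unfolding eventually_at_bot_linorder
proof -
  assume "\<exists>N. \<forall>n\<le>N. P n"
  then obtain N where N: "\<And>n. n \<le> N \<Longrightarrow> P n" by blast
  show "\<exists>N. \<forall>n\<le>N. \<forall>t\<in>{n..n+1}. P t"
    by (rule exI[of _ "N - 1"]) (auto intro!: N)
qed

lemma deriv_tendsto:
  fixes v v' v'' :: "real \<Rightarrow> complex"
  assumes d1: "\<And>t. (v has_vector_derivative v' t) (at t)"
    and d2: "\<And>t. (v' has_vector_derivative v'' t) (at t)"
    and l1: "(v \<longlongrightarrow> 0) F" and l2: "(v'' \<longlongrightarrow> 0) F"
    and sh: "\<And>P. eventually P F \<Longrightarrow> eventually (\<lambda>x. \<forall>t\<in>{x..x+1}. P t) F"
  shows "(v' \<longlongrightarrow> 0) F"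
proof (rule tendstoI)
  fix ep :: real assume ep: "ep > 0"
  have "eventually (\<lambda>t. dist (v t) 0 < ep/4) F" using l1 ep by (intro tendstoD) auto
  moreover have "eventually (\<lambda>t. dist (v'' t) 0 < ep/4) F" using l2 ep by (intro tendstoD) auto
  ultimately have "eventually (\<lambda>t. norm (v t) \<le> ep/4 \<and> norm (v'' t) \<le> ep/4) F"
    by eventually_elim auto
  from sh[OF this] show "eventually (\<lambda>x. dist (v' x) 0 < ep) F"
  proof eventually_elim
    case (elim x)
    have "norm (v' x) \<le> 3 * (ep/4)" by (rule deriv_bound_pt[OF d1 d2]) (use elim in auto)
    then show ?case using ep by simp
  qed
qed

lemma prod_diff:
  fixes a b c d :: "real \<Rightarrow> complex"
  assumes "((\<lambda>x. a x - b x) \<longlongrightarrow> 0) F" "((\<lambda>x. c x - d x) \<longlongrightarrow> 0) F"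
    and "\<And>x. norm (b x) \<le> B" "\<And>x. norm (d x) \<le> D"
  shows "((\<lambda>x. a x * c x - b x * d x) \<longlongrightarrow> 0) F"
proof -
  have e: "a x * c x - b x * d x = (a x - b x) * (c x - d x) + (a x - b x) * d x + b x * (c x - d x)" for x
    by (simp add: algebra_simps)
  have "((\<lambda>x. (a x - b x) * (c x - d x) + (a x - b x) * d x + b x * (c x - d x)) \<longlongrightarrow> 0 * 0 + 0 + 0) F"
    by (intro tendsto_add tendsto_mult assms(1,2) mult_zero_bdd[OF assms(1) assms(4)]
        mult_zero_bdd'[OF assms(2) assms(3)])
  then show ?thesis unfolding e by simp
qed

lemma lims:
  fixes u u' w w' :: "real \<Rightarrow> complex" and h :: "real \<Rightarrow> real"
  assumes l1: "((\<lambda>x. u x - w x) \<longlongrightarrow> 0) F" and l2: "((\<lambda>x. u' x - w' x) \<longlongrightarrow> 0) F"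
    and b1: "\<And>x. norm (w x) \<le> B" and b2: "\<And>x. norm (w' x) \<le> B"
    and hl: "(h \<longlongrightarrow> k) F" and k: "k > 0" and hp: "\<And>x. h x > 0"
  shows "((\<lambda>x. (h x * (norm (u x))\<^sup>2 + (norm (u' x))\<^sup>2 / h x) - (k * (norm (w x))\<^sup>2 + (norm (w' x))\<^sup>2 / k)) \<longlongrightarrow> 0) F"
    and "((\<lambda>x. Im (cnj (u x) * u' x) - Im (cnj (w x) * w' x)) \<longlongrightarrow> 0) F"
proof -
  have c1: "((\<lambda>x. cnj (u x) - cnj (w x)) \<longlongrightarrow> 0) F" using tendsto_cnj[OF l1] by simp
  have c2: "((\<lambda>x. cnj (u' x) - cnj (w' x)) \<longlongrightarrow> 0) F" using tendsto_cnj[OF l2] by simp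
  have bc1: "norm (cnj (w x)) \<le> B" for x using b1 by simp
  have bc2: "norm (cnj (w' x)) \<le> B" for x using b2 by simp
  have P: "((\<lambda>x. (norm (u x))\<^sup>2 - (norm (w x))\<^sup>2) \<longlongrightarrow> 0) F"
  proof -
    have "((\<lambda>x. u x * cnj (u x) - w x * cnj (w x)) \<longlongrightarrow> 0) F" by (rule prod_diff[OF l1 c1 b1 bc1])
    moreover have "complex_of_real ((norm (u x))\<^sup>2 - (norm (w x))\<^sup>2) = u x * cnj (u x) - w x * cnj (w x)" for x
      by (simp only: of_real_diff complex_norm_square)
    ultimately have "((\<lambda>x. complex_of_real ((norm (u x))\<^sup>2 - (norm (w x))\<^sup>2)) \<longlongrightarrow> 0) F"
      by simp
    then show ?thesis by (metis of_real_0 tendsto_of_real_iff)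
  qed
  have Q: "((\<lambda>x. (norm (u' x))\<^sup>2 - (norm (w' x))\<^sup>2) \<longlongrightarrow> 0) F"
  proof -
    have "((\<lambda>x. u' x * cnj (u' x) - w' x * cnj (w' x)) \<longlongrightarrow> 0) F" by (rule prod_diff[OF l2 c2 b2 bc2])
    moreover have "complex_of_real ((norm (u' x))\<^sup>2 - (norm (w' x))\<^sup>2) = u' x * cnj (u' x) - w' x * cnj (w' x)" for x
      by (simp only: of_real_diff complex_norm_square)
    ultimately have "((\<lambda>x. complex_of_real ((norm (u' x))\<^sup>2 - (norm (w' x))\<^sup>2)) \<longlongrightarrow> 0) F"
      by simp
    then show ?thesis by (metis of_real_0 tendsto_of_real_iff)
  qed
  have hk: "((\<lambda>x. h x - k) \<longlongrightarrow> 0) F" using tendsto_diff[OF hl tendsto_const[of k]] by simp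
  have hk2: "((\<lambda>x. 1 / h x - 1 / k) \<longlongrightarrow> 0) F"
    using tendsto_diff[OF tendsto_divide[OF tendsto_const[of 1] hl] tendsto_const[of "1/k"]] k by simp
  have bw1: "norm ((norm (w x))\<^sup>2) \<le> B\<^sup>2" for x using b1[of x] by (simp add: power_mono)
  have bw2: "norm ((norm (w' x))\<^sup>2) \<le> B\<^sup>2" for x using b2[of x] by (simp add: power_mono)
  have e: "(h x * (norm (u x))\<^sup>2 + (norm (u' x))\<^sup>2 / h x) - (k * (norm (w x))\<^sup>2 + (norm (w' x))\<^sup>2 / k)
    = h x * ((norm (u x))\<^sup>2 - (norm (w x))\<^sup>2) + ((norm (u' x))\<^sup>2 - (norm (w' x))\<^sup>2) * (1 / h x)
      + (h x - k) * (norm (w x))\<^sup>2 + (1 / h x - 1 / k) * (norm (w' x))\<^sup>2" for x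
    using hp[of x] k by (simp add: field_simps)
  have "((\<lambda>x. h x * ((norm (u x))\<^sup>2 - (norm (w x))\<^sup>2) + ((norm (u' x))\<^sup>2 - (norm (w' x))\<^sup>2) * (1 / h x)
      + (h x - k) * (norm (w x))\<^sup>2 + (1 / h x - 1 / k) * (norm (w' x))\<^sup>2) \<longlongrightarrow> k * 0 + 0 * (1/k) + 0 + 0) F"
    by (intro tendsto_add tendsto_mult hl P Q tendsto_divide tendsto_const mult_zero_bdd[OF hk bw1]
        mult_zero_bdd[OF hk2 bw2]) (use k in auto)
  then show "((\<lambda>x. (h x * (norm (u x))\<^sup>2 + (norm (u' x))\<^sup>2 / h x) - (k * (norm (w x))\<^sup>2 + (norm (w' x))\<^sup>2 / k)) \<longlongrightarrow> 0) F"
    unfolding e by simp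
  have "((\<lambda>x. cnj (u x) * u' x - cnj (w x) * w' x) \<longlongrightarrow> 0) F" by (rule prod_diff[OF c1 l2 bc1 b2])
  from tendsto_Im[OF this] show "((\<lambda>x. Im (cnj (u x) * u' x) - Im (cnj (w x) * w' x)) \<longlongrightarrow> 0) F" by simp
qed



lemma final_alg:
  fixes T s th :: real
  assumes s0: "0 \<le> s" and sT: "s\<^sup>2 = 1 - T" and ineq: "(1+s)\<^sup>2 \<le> T * exp (2*th)"
  shows "(sech th)\<^sup>2 \<le> T"
proof -
  define y where "y = exp th"
  have y0: "y > 0" by (simp add: y_def)
  define E where "E = y\<^sup>2"
  have E0: "E > 0" using y0 by (simp add: E_def)
  have Ee: "exp (2*th) = E" unfolding E_def y_def power2_eq_square by (simp only: mult_2 exp_add)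
  have T: "T = (1-s)*(1+s)" using sT by (simp add: power2_eq_square algebra_simps)
  have "(1+s)*(1+s) \<le> ((1-s)*E)*(1+s)" using ineq unfolding Ee T by (simp add: power2_eq_square algebra_simps)
  then have "1+s \<le> (1-s)*E" using mult_right_le_imp_le[where a="1+s" and b="(1-s)*E" and c="1+s"] s0 by simp
  then have "s*(E+1) \<le> E - 1" by (simp add: algebra_simps)
  then have sle: "s \<le> (E-1)/(E+1)" using E0 by (subst pos_le_divide_eq) auto
  have "s\<^sup>2 \<le> ((E-1)/(E+1))\<^sup>2" using sle s0 by (intro power_mono) auto
  moreover have "(sech th)\<^sup>2 = 1 - ((E-1)/(E+1))\<^sup>2"
  proof -
    have c: "cosh th = (y + inverse y)/2" unfolding cosh_def y_def exp_minus by simp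
    have "y + inverse y = (E+1)/y" using y0 unfolding E_def by (simp add: field_simps power2_eq_square)
    then have "sech th = 2*y/(E+1)" unfolding sech_def c using y0 E0 by simp
    then have "(sech th)\<^sup>2 = 4*E/(E+1)\<^sup>2" unfolding E_def by (simp add: power_divide power_mult_distrib)
    also have "\<dots> = 1 - ((E-1)/(E+1))\<^sup>2" using E0 by (simp add: divide_simps) (simp add: power2_eq_square algebra_simps)
    finally show ?thesis .
  qed
  ultimately show ?thesis using sT by linarith
qed

lemma asym_deriv:
  fixes u u' w w' :: "real \<Rightarrow> complex" and q :: "real \<Rightarrow> real" and k B :: real
  assumes du: "\<And>x. (u has_vector_derivative u' x) (at x)"
    and du': "\<And>x. (u' has_vector_derivative (- (complex_of_real (q x) * u x))) (at x)"
    and dw: "\<And>x. (w has_vector_derivative w' x) (at x)"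
    and dw': "\<And>x. (w' has_vector_derivative (- (complex_of_real (k\<^sup>2) * w x))) (at x)"
    and l: "((\<lambda>x. u x - w x) \<longlongrightarrow> 0) F" and ql: "(q \<longlongrightarrow> k\<^sup>2) F"
    and bw: "\<And>x. norm (w x) \<le> B"
    and sh: "\<And>P. eventually P F \<Longrightarrow> eventually (\<lambda>x. \<forall>t\<in>{x..x+1}. P t) F"
  shows "((\<lambda>x. u' x - w' x) \<longlongrightarrow> 0) F"
proof (rule deriv_tendsto[OF _ _ l _ sh])
  show "((\<lambda>x. u x - w x) has_vector_derivative u' t - w' t) (at t)" for t
    by (rule has_vector_derivative_diff[OF du dw])
  show "((\<lambda>x. u' x - w' x) has_vector_derivative
      (- (complex_of_real (q t) * u t)) - (- (complex_of_real (k\<^sup>2) * w t))) (at t)" for t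
    by (rule has_vector_derivative_diff[OF du' dw'])
  have e: "(- (complex_of_real (q t) * u t)) - (- (complex_of_real (k\<^sup>2) * w t))
     = - (complex_of_real (q t) * (u t - w t)) + complex_of_real (k\<^sup>2 - q t) * w t" for t
    by (simp add: algebra_simps)
  have ql': "((\<lambda>t. complex_of_real (q t)) \<longlongrightarrow> complex_of_real (k\<^sup>2)) F"
    using ql by (rule tendsto_of_real)
  have ql2: "((\<lambda>t. complex_of_real (k\<^sup>2 - q t)) \<longlongrightarrow> 0) F"
  proof -
    have "((\<lambda>t. k\<^sup>2 - q t) \<longlongrightarrow> k\<^sup>2 - k\<^sup>2) F" by (intro tendsto_intros ql)
    then show ?thesis by (metis diff_self of_real_0 tendsto_of_real)
  qed
  have "((\<lambda>t. - (complex_of_real (q t) * (u t - w t)) + complex_of_real (k\<^sup>2 - q t) * w t)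
      \<longlongrightarrow> - (complex_of_real (k\<^sup>2) * 0) + 0) F"
    by (intro tendsto_add tendsto_minus tendsto_mult ql' l mult_zero_bdd[OF ql2 bw])
  then show "((\<lambda>t. (- (complex_of_real (q t) * u t)) - (- (complex_of_real (k\<^sup>2) * w t))) \<longlongrightarrow> 0) F"
    unfolding e by simp
qed

lemma parallelogram_c: "(norm (a + b))\<^sup>2 + (norm (a - b))\<^sup>2 = 2 * (norm a)\<^sup>2 + 2 * (norm (b::complex))\<^sup>2"
  unfolding cmod_power2 by (simp add: power2_eq_square algebra_simps)

lemma im_ident: "Im (cnj (a + b) * (\<i> * complex_of_real k * (a - b))) = k * ((norm a)\<^sup>2 - (norm b)\<^sup>2)"
  unfolding cmod_power2 by (simp add: power2_eq_square algebra_simps)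

lemma exp_deriv:
  fixes c :: complex
  shows "((\<lambda>x::real. exp (c * complex_of_real x)) has_vector_derivative c * exp (c * complex_of_real x)) (at x)"
  by (rule has_vector_derivative_real_field) (auto intro!: derivative_eq_intros)


lemma eps_lemma:
  fixes A B C :: real
  assumes C: "C \<ge> 0" and H: "\<And>e. e > 0 \<Longrightarrow> A \<le> B + C * sqrt e"
  shows "A \<le> B"
proof (rule ccontr)
  assume "\<not> A \<le> B"
  then have d: "A - B > 0" by simp
  define e where "e = ((A - B) / (C + 1))\<^sup>2"
  have e0: "e > 0" using d C by (simp add: e_def)
  have se: "sqrt e = (A - B) / (C + 1)" using d C by (simp add: e_def)
  have "C * sqrt e < A - B"
  proof -
    have "C * ((A - B) / (C + 1)) < (C + 1) * ((A - B) / (C + 1))"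
      using d C by (intro mult_strict_right_mono) auto
    also have "\<dots> = A - B" using C by simp
    finally show ?thesis unfolding se .
  qed
  with H[OF e0] show False by simp
qed

lemma final_ineq:
  fixes k R Tt W0 h0 J :: real
  assumes k: "k > 0" and R0: "R \<ge> 0" and T0: "Tt \<ge> 0" and WT: "W0 = k*Tt" and WB: "W0 = k*(1-R)"
    and h0: "h0 \<ge> k"
    and H: "\<And>e. e > 0 \<Longrightarrow> ln (2*k*(1+R) + sqrt ((2*k*(1+R))\<^sup>2 - 4*W0\<^sup>2 + e)) + ln k
       \<le> ln (2*k*Tt + sqrt ((2*k*Tt)\<^sup>2 - 4*W0\<^sup>2 + e)) - ln k + 2 * ln h0 + 2 * J"
  shows "(1 + sqrt R)\<^sup>2 \<le> Tt * exp (2 * ((h0 - k) / k + J))"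
proof -
  define s where "s = sqrt R"
  have s0: "s \<ge> 0" and sR: "s\<^sup>2 = R" using R0 by (auto simp: s_def)
  have h0p: "h0 > 0" using k h0 by linarith
  have em: "(2*k*(1+R))\<^sup>2 - 4*W0\<^sup>2 = 16*k\<^sup>2*R" unfolding WB by (simp add: power2_eq_square algebra_simps)
  have ep: "(2*k*Tt)\<^sup>2 - 4*W0\<^sup>2 = 0" unfolding WT by (simp add: power2_eq_square algebra_simps)
  have main: "2*k^3*(1+s)\<^sup>2 \<le> 2*k*Tt*h0\<^sup>2*exp (2*J) + (h0\<^sup>2*exp (2*J)) * sqrt e" if e: "e > 0" for e
  proof -
    define Pm where "Pm = 2*k*(1+R) + sqrt (16*k\<^sup>2*R + e)"
    define Pp where "Pp = 2*k*Tt + sqrt e"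
    have Pm0: "Pm > 0" unfolding Pm_def using k R0 e by (intro add_pos_nonneg) auto
    have Pp0: "Pp > 0" unfolding Pp_def using k T0 e by (intro add_nonneg_pos) auto
    have "ln Pm + ln k \<le> ln Pp - ln k + 2 * ln h0 + 2 * J"
      using H[OF e] unfolding em ep Pm_def Pp_def by simp
    then have "ln (Pm * k * k) \<le> ln (Pp * h0\<^sup>2 * exp (2*J))"
      using Pm0 Pp0 k h0p by (simp add: ln_mult power2_eq_square)
    then have le: "Pm * k * k \<le> Pp * h0\<^sup>2 * exp (2*J)"
      using Pm0 Pp0 k h0p by simp
    have "sqrt (16*k\<^sup>2*R) \<le> sqrt (16*k\<^sup>2*R + e)" using e by simp
    moreover have "sqrt (16*k\<^sup>2*R) = 4*k * s" using k R0 unfolding s_def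
      by (simp add: real_sqrt_mult)
    ultimately have q: "4*k * s \<le> sqrt (16*k\<^sup>2*R + e)" by simp
    have "2*k*(1+s)\<^sup>2 = 2*k*(1+R) + 4*k * s" unfolding sR[symmetric] by (simp add: power2_eq_square algebra_simps)
    then have "2*k*(1+s)\<^sup>2 \<le> Pm" unfolding Pm_def using q by linarith
    then have "2*k*(1+s)\<^sup>2 * (k*k) \<le> Pm * (k * k)" using k by (intro mult_right_mono) auto
    then have "2*k^3*(1+s)\<^sup>2 \<le> Pm * k * k" by (simp add: power3_eq_cube algebra_simps)
    also have "\<dots> \<le> Pp * h0\<^sup>2 * exp (2*J)" by (rule le)
    also have "\<dots> = 2*k*Tt*h0\<^sup>2*exp (2*J) + (h0\<^sup>2*exp (2*J)) * sqrt e" by (simp add: Pp_def algebra_simps)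
    finally show ?thesis .
  qed
  have "2*k^3*(1+s)\<^sup>2 \<le> 2*k*Tt*h0\<^sup>2*exp (2*J)"
    by (rule eps_lemma[OF _ main]) auto
  then have "(2*k^3)*(1+s)\<^sup>2 \<le> (2*k^3) * (Tt * (h0/k)\<^sup>2 * exp (2*J))"
    using k by (simp add: power_divide power3_eq_cube power2_eq_square field_simps)
  then have A: "(1+s)\<^sup>2 \<le> Tt * (h0/k)\<^sup>2 * exp (2*J)"
    using k by (subst (asm) mult_le_cancel_left_pos) auto
  have "h0/k = 1 + (h0 - k)/k" using k by (simp add: field_simps)
  also have "\<dots> \<le> exp ((h0 - k)/k)" by (rule exp_ge_add_one_self)
  finally have "(h0/k)\<^sup>2 \<le> (exp ((h0 - k)/k))\<^sup>2" using k h0p by (intro power_mono) auto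
  also have "\<dots> = exp (2*((h0 - k)/k))" unfolding power2_eq_square by (simp only: mult_2 exp_add)
  finally have B: "(h0/k)\<^sup>2 \<le> exp (2*((h0 - k)/k))" .
  have "Tt * (h0/k)\<^sup>2 * exp (2*J) \<le> Tt * exp (2*((h0 - k)/k)) * exp (2*J)"
    using B T0 by (intro mult_right_mono mult_left_mono) auto
  also have "\<dots> = Tt * exp (2 * ((h0 - k) / k + J))" by (simp add: exp_add[symmetric] algebra_simps)
  finally show ?thesis using A unfolding s_def by linarith
qed

theorem mainTheorem12:
  fixes q :: "real \<Rightarrow> real" and kinf :: real and x0 :: real
    and u :: "real \<Rightarrow> complex" and r \<tau> :: complex
  assumes kinf_pos: "kinf > 0"
    and pc: "piecewise_continuous q"
    and lim_top: "(q \<longlongrightarrow> kinf\<^sup>2) at_top"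
    and lim_bot: "(q \<longlongrightarrow> kinf\<^sup>2) at_bot"
    and int_top: "\<exists>a. (\<lambda>x. q x - kinf\<^sup>2) absolutely_integrable_on {a..}"
    and int_bot: "\<exists>a. (\<lambda>x. q x - kinf\<^sup>2) absolutely_integrable_on {..a}"
    and below: "\<And>x. q x \<le> kinf\<^sup>2"
    and chi_cont: "continuous_on UNIV (\<lambda>x. sqrt (kinf\<^sup>2 - q x))"
    and chi_pwC1: "\<And>a b. (\<lambda>x. sqrt (kinf\<^sup>2 - q x)) piecewise_C1_differentiable_on {a..b}"
    and hump_up: "mono_on {..x0} (\<lambda>x. sqrt (kinf\<^sup>2 - q x))"
    and hump_down: "antimono_on {x0..} (\<lambda>x. sqrt (kinf\<^sup>2 - q x))"
    and sol: "is_solution q u"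
    and asym_bot: "((\<lambda>x. u x - (exp (\<i> * of_real kinf * of_real x)
                               + r * exp (- (\<i> * of_real kinf * of_real x)))) \<longlongrightarrow> 0) at_bot"
    and asym_top: "((\<lambda>x. u x - \<tau> * exp (\<i> * of_real kinf * of_real x)) \<longlongrightarrow> 0) at_top"
  shows "(let I = (\<integral>\<^sup>+ x. ennreal (sqrt (kinf\<^sup>2 - q x)) \<partial>lborel) in
           (if I = \<infinity> then 0
            else (sech ((SUP x. sqrt (kinf\<^sup>2 - q x)) / kinf + enn2real I))\<^sup>2))
         \<le> (kinf / kinf) * (cmod \<tau>)\<^sup>2"
proof -
  define k where "k = kinf"
  have k: "k > 0" using kinf_pos by (simp add: k_def)
  define chi where "chi x = sqrt (kinf\<^sup>2 - q x)" for x
  have chipos: "chi x \<ge> 0" for x using below[of x] by (simp add: chi_def)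
  have qchi: "q x = kinf\<^sup>2 - (chi x)\<^sup>2" for x
  proof -
    have "0 \<le> kinf\<^sup>2 - q x" using below[of x] by simp
    then show ?thesis unfolding chi_def by simp
  qed
  have chic: "continuous_on UNIV chi" using chi_cont by (simp add: chi_def[abs_def])
  have qeq: "q = (\<lambda>x. kinf\<^sup>2 - (chi x)\<^sup>2)" using qchi by auto
  have qcont: "isCont q x" for x
  proof -
    have "continuous_on UNIV (\<lambda>x. kinf\<^sup>2 - (chi x)\<^sup>2)" by (intro continuous_intros chic)
    then show ?thesis unfolding qeq by (simp add: continuous_on_eq_continuous_at)
  qed
  obtain u' where du: "\<And>x. (u has_vector_derivative u' x) (at x)"
     and du': "\<And>x. (u' has_vector_derivative (- (complex_of_real (q x) * u x))) (at x)"
    using sol qcont unfolding is_solution_def by blast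
  define X where "X x = Re (u x)" for x
  define Y where "Y x = Im (u x)" for x
  define X1 where "X1 x = Re (u' x)" for x
  define Y1 where "Y1 x = Im (u' x)" for x
  have dX: "(X has_real_derivative X1 x) (at x)" for x
    unfolding X_def[abs_def] X1_def using has_field_derivative_Re[OF du[of x]] .
  have dY: "(Y has_real_derivative Y1 x) (at x)" for x
    unfolding Y_def[abs_def] Y1_def using has_field_derivative_Im[OF du[of x]] .
  have dX1: "(X1 has_real_derivative (- ((k\<^sup>2 - (chi x)\<^sup>2) * X x))) (at x)" for x
  proof -
    have "Re (- (complex_of_real (q x) * u x)) = - ((k\<^sup>2 - (chi x)\<^sup>2) * X x)"
      by (simp add: X_def qchi k_def)
    then show ?thesis using has_field_derivative_Re[OF du'[of x]] unfolding X1_def[abs_def] by simp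
  qed
  have dY1: "(Y1 has_real_derivative (- ((k\<^sup>2 - (chi x)\<^sup>2) * Y x))) (at x)" for x
  proof -
    have "Im (- (complex_of_real (q x) * u x)) = - ((k\<^sup>2 - (chi x)\<^sup>2) * Y x)"
      by (simp add: Y_def qchi k_def)
    then show ?thesis using has_field_derivative_Im[OF du'[of x]] unfolding Y1_def[abs_def] by simp
  qed
  define Wf where "Wf x = X x * Y1 x - Y x * X1 x" for x
  have "(Wf has_real_derivative 0) (at x)" for x unfolding Wf_def[abs_def]
    by (auto intro!: derivative_eq_intros dX dY dX1 dY1 simp: algebra_simps)
  then obtain W0 where W: "\<And>x. Wf x = W0"
    using has_field_derivative_zero_constant[of UNIV Wf] by auto
  have WIm: "Im (cnj (u x) * u' x) = W0" for x
    using W[of x] by (simp add: Wf_def X_def Y_def X1_def Y1_def algebra_simps)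
  have chitop: "(chi \<longlongrightarrow> 0) at_top"
  proof -
    have "((\<lambda>x. sqrt (kinf\<^sup>2 - q x)) \<longlongrightarrow> sqrt (kinf\<^sup>2 - kinf\<^sup>2)) at_top"
      by (intro tendsto_intros lim_top)
    then show ?thesis by (simp add: chi_def[abs_def])
  qed
  have chibot: "(chi \<longlongrightarrow> 0) at_bot"
  proof -
    have "((\<lambda>x. sqrt (kinf\<^sup>2 - q x)) \<longlongrightarrow> sqrt (kinf\<^sup>2 - kinf\<^sup>2)) at_bot"
      by (intro tendsto_intros lim_bot)
    then show ?thesis by (simp add: chi_def[abs_def])
  qed
  have htop: "((\<lambda>x. k + chi x) \<longlongrightarrow> k) at_top" using tendsto_add[OF tendsto_const[of k] chitop] by simp
  have hbot: "((\<lambda>x. k + chi x) \<longlongrightarrow> k) at_bot" using tendsto_add[OF tendsto_const[of k] chibot] by simp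
  have hpos: "k + chi x > 0" for x using k chipos[of x] by linarith
  define ex where "ex x = exp (\<i> * of_real kinf * of_real x)" for x
  define em where "em x = exp (- (\<i> * of_real kinf * of_real x))" for x
  have nex: "norm (ex x) = 1" for x by (simp add: ex_def norm_exp_eq_Re)
  have nem: "norm (em x) = 1" for x by (simp add: em_def norm_exp_eq_Re)
  have dex: "(ex has_vector_derivative (\<i> * of_real kinf) * ex x) (at x)" for x
    unfolding ex_def by (rule exp_deriv)
  have dem: "(em has_vector_derivative (- (\<i> * of_real kinf)) * em x) (at x)" for x
    using exp_deriv[of "- (\<i> * of_real kinf)" x] unfolding em_def by simp
  define wT where "wT x = \<tau> * ex x" for x
  define wT' where "wT' x = \<tau> * ((\<i> * of_real kinf) * ex x)" for x
  have dwT: "(wT has_vector_derivative wT' x) (at x)" for x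
    unfolding wT_def[abs_def] wT'_def by (auto intro!: derivative_eq_intros dex)
  have dwT': "(wT' has_vector_derivative (- (complex_of_real (k\<^sup>2) * wT x))) (at x)" for x
    unfolding wT'_def[abs_def] wT_def
    by (rule has_vector_derivative_eq_rhs, (rule derivative_intros dex)+)
       (simp add: k_def power2_eq_square algebra_simps)
  have BT: "norm (wT x) \<le> cmod \<tau> * (1 + k)" "norm (wT' x) \<le> cmod \<tau> * (1 + k)" for x
    using k mult_left_mono[of 1 "1+kinf" "cmod \<tau>"] mult_left_mono[of kinf "1+kinf" "cmod \<tau>"]
    by (auto simp: wT_def wT'_def norm_mult nex k_def)
  have uT: "((\<lambda>x. u x - wT x) \<longlongrightarrow> 0) at_top" using asym_top unfolding wT_def ex_def .
  have u'T: "((\<lambda>x. u' x - wT' x) \<longlongrightarrow> 0) at_top"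
    by (rule asym_deriv[OF du du' dwT dwT' uT _ BT(1) ev_shift_top]) (simp add: k_def lim_top)
  note limT = lims[OF uT u'T BT htop k hpos]
  define wB where "wB x = ex x + r * em x" for x
  define wB' where "wB' x = (\<i> * of_real kinf) * ex x + r * ((- (\<i> * of_real kinf)) * em x)" for x
  have dwB: "(wB has_vector_derivative wB' x) (at x)" for x
    unfolding wB_def[abs_def] wB'_def by (auto intro!: derivative_eq_intros dex dem)
  have dwB': "(wB' has_vector_derivative (- (complex_of_real (k\<^sup>2) * wB x))) (at x)" for x
    unfolding wB'_def[abs_def] wB_def
    by (rule has_vector_derivative_eq_rhs, (rule derivative_intros dex dem)+)
       (simp add: k_def power2_eq_square algebra_simps)
  have wB'e: "wB' x = \<i> * of_real k * (ex x - r * em x)" for x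
    by (simp add: wB'_def k_def algebra_simps)
  have BB: "norm (wB x) \<le> (1 + cmod r) * (1 + k)" "norm (wB' x) \<le> (1 + cmod r) * (1 + k)" for x
  proof -
    have a: "norm (ex x - r * em x) \<le> 1 + cmod r"
      using norm_triangle_ineq4[of "ex x" "r * em x"] by (simp add: nex nem norm_mult)
    have b: "norm (wB x) \<le> 1 + cmod r"
      using norm_triangle_ineq[of "ex x" "r * em x"] by (simp add: wB_def nex nem norm_mult)
    show "norm (wB x) \<le> (1 + cmod r) * (1 + k)"
    proof -
      have c: "1 + cmod r \<le> (1 + cmod r) * (1 + k)" using mult_left_mono[of 1 "1+k" "1 + cmod r"] k by simp
      show ?thesis using b c by linarith
    qed
    have "norm (wB' x) = k * norm (ex x - r * em x)" using k by (simp add: wB'e norm_mult)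
    also have "\<dots> \<le> k * (1 + cmod r)" using a k by (intro mult_left_mono) auto
    also have "\<dots> \<le> (1 + cmod r) * (1 + k)" by (simp add: algebra_simps)
    finally show "norm (wB' x) \<le> (1 + cmod r) * (1 + k)" .
  qed
  have uB: "((\<lambda>x. u x - wB x) \<longlongrightarrow> 0) at_bot" using asym_bot unfolding wB_def ex_def em_def .
  have u'B: "((\<lambda>x. u' x - wB' x) \<longlongrightarrow> 0) at_bot"
    by (rule asym_deriv[OF du du' dwB dwB' uB _ BB(1) ev_shift_bot]) (simp add: k_def lim_bot)
  note limB = lims[OF uB u'B BB hbot k hpos]
  define Fn where "Fn x = (k + chi x)*((X x)\<^sup>2+(Y x)\<^sup>2) + ((X1 x)\<^sup>2+(Y1 x)\<^sup>2)/(k + chi x)" for x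
  have Fn_norm: "Fn x = (k + chi x) * (norm (u x))\<^sup>2 + (norm (u' x))\<^sup>2 / (k + chi x)" for x
    by (simp add: Fn_def cmod_power2 X_def Y_def X1_def Y1_def)
  define Tt where "Tt = (cmod \<tau>)\<^sup>2"
  define R where "R = (cmod r)\<^sup>2"
  have nwT: "norm (wT x) = cmod \<tau>" "norm (wT' x) = k * cmod \<tau>" for x
    using k by (simp_all add: wT_def wT'_def norm_mult nex k_def)
  have idT1: "k * (norm (wT x))\<^sup>2 + (norm (wT' x))\<^sup>2 / k = 2*k*Tt" for x
    using k unfolding nwT Tt_def by (simp add: power2_eq_square field_simps)
  have idT2: "Im (cnj (wT x) * wT' x) = k * Tt" for x
  proof -
    have "cnj (wT x) * wT' x = \<i> * of_real k * (cnj (wT x) * wT x)"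
      by (simp add: wT_def wT'_def k_def algebra_simps)
    also have "cnj (wT x) * wT x = of_real ((norm (wT x))\<^sup>2)"
      by (subst complex_norm_square) (rule mult.commute)
    finally show ?thesis unfolding nwT Tt_def by simp
  qed
  have idB1: "k * (norm (wB x))\<^sup>2 + (norm (wB' x))\<^sup>2 / k = 2*k*(1+R)" for x
  proof -
    have p: "(norm (wB x))\<^sup>2 + (norm (ex x - r * em x))\<^sup>2 = 2 + 2*R"
      using parallelogram_c[of "ex x" "r * em x"] by (simp add: wB_def nex nem norm_mult R_def)
    have "norm (wB' x) = k * norm (ex x - r * em x)" using k by (simp add: wB'e norm_mult)
    then have "(norm (wB' x))\<^sup>2 / k = k * (norm (ex x - r * em x))\<^sup>2"
      using k by (simp add: power2_eq_square)
    then have "k * (norm (wB x))\<^sup>2 + (norm (wB' x))\<^sup>2 / k = k * ((norm (wB x))\<^sup>2 + (norm (ex x - r * em x))\<^sup>2)"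
      by (simp add: algebra_simps)
    also have "\<dots> = 2*k*(1+R)" unfolding p by (simp add: algebra_simps)
    finally show ?thesis .
  qed
  have idB2: "Im (cnj (wB x) * wB' x) = k * (1 - R)" for x
    unfolding wB'e wB_def using im_ident[of "ex x" "r * em x" k] by (simp add: nex nem norm_mult R_def)
  have FT: "(Fn \<longlongrightarrow> 2*k*Tt) at_top"
    using limT(1) unfolding idT1 Fn_norm[symmetric] LIM_zero_iff .
  have FB: "(Fn \<longlongrightarrow> 2*k*(1+R)) at_bot"
    using limB(1) unfolding idB1 Fn_norm[symmetric] LIM_zero_iff .
  have W0T: "W0 = k * Tt"
    using limT(2) unfolding idT2 WIm by (simp add: tendsto_const_iff)
  have W0B: "W0 = k * (1 - R)"
    using limB(2) unfolding idB2 WIm by (simp add: tendsto_const_iff)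
  have RT: "R = 1 - Tt" using W0T W0B k by simp
  have Tt0: "Tt \<ge> 0" by (simp add: Tt_def)
  have R0: "R \<ge> 0" by (simp add: R_def)
  have Ieq: "(\<integral>\<^sup>+ x. ennreal (sqrt (kinf\<^sup>2 - q x)) \<partial>lborel) = (\<integral>\<^sup>+ x. ennreal (chi x) \<partial>lborel)"
    by (simp add: chi_def)
  have Seq: "(SUP x. sqrt (kinf\<^sup>2 - q x)) = (SUP x. chi x)" by (simp add: chi_def)
  have rhs: "kinf / kinf * (cmod \<tau>)\<^sup>2 = Tt" using kinf_pos by (simp add: Tt_def)
  define I where "I = (\<integral>\<^sup>+ x. ennreal (chi x) \<partial>lborel)"
  show ?thesis
  proof (cases "I = \<infinity>")
    case True
    then show ?thesis unfolding Let_def Ieq rhs I_def[symmetric] using Tt0 by simp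
  next
    case False
    define J where "J = enn2real I"
    have chimax: "chi x \<le> chi x0" for x
    proof (cases "x \<le> x0")
      case True
      then show ?thesis using hump_up unfolding monotone_on_def chi_def by auto
    next
      case False
      then show ?thesis using hump_down unfolding monotone_on_def chi_def by auto
    qed
    have SUPeq: "(SUP x. chi x) = chi x0"
      by (rule cSup_eq_maximum) (auto intro: chimax)
    have intJ: "integral {a..b} chi \<le> J" if "a \<le> b" for a b
    proof -
      have cint: "chi integrable_on {a..b}"
        by (rule integrable_continuous_real, rule continuous_on_subset[OF chic]) auto
      have ci: "(chi has_integral integral {a..b} chi) {a..b}"
        using cint by (rule integrable_integral)
      have "(\<integral>\<^sup>+ x. ennreal (indicator {a..b} x * chi x) \<partial>lborel) = ennreal (integral {a..b} chi)"
        using nn_integral_has_integral_lebesgue[OF _ ci] chipos by simp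
      moreover have "(\<integral>\<^sup>+ x. ennreal (indicator {a..b} x * chi x) \<partial>lborel) \<le> I"
        unfolding I_def by (intro nn_integral_mono ennreal_leI) (auto simp: indicator_def chipos)
      ultimately have le: "ennreal (integral {a..b} chi) \<le> I" by simp
      have nn: "integral {a..b} chi \<ge> 0" by (rule integral_nonneg[OF cint]) (use chipos in auto)
      have "enn2real (ennreal (integral {a..b} chi)) \<le> enn2real I"
        using le False by (intro enn2real_mono) (auto simp: top.not_eq_extremum)
      then show ?thesis unfolding J_def using nn by simp
    qed
    have key: "ln (Fn a + sqrt ((Fn a)\<^sup>2 - 4*W0\<^sup>2 + e)) + ln (k + chi a)
        \<le> ln (Fn b + sqrt ((Fn b)\<^sup>2 - 4*W0\<^sup>2 + e)) - ln (k + chi b) + 2 * ln (k + chi x0) + 2 * J"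
      if e: "e > 0" and ab: "a \<le> x0" "x0 \<le> b" for e a b
    proof -
      have chieq: "chi = (\<lambda>x. sqrt (kinf\<^sup>2 - q x))" by (simp add: chi_def[abs_def])
      have pwc: "chi piecewise_C1_differentiable_on {c..d}" for c d using chi_pwC1 by (simp add: chieq)
      have Wx: "X x * Y1 x - Y x * X1 x = W0" for x using W[of x] by (simp add: Wf_def)
      obtain S1 D1 where S1: "finite S1" and D1: "\<And>x. x \<in> {a..x0} - S1 \<Longrightarrow> (chi has_vector_derivative D1 x) (at x)"
        using pwc[of a x0] unfolding piecewise_C1_differentiable_on_def C1_differentiable_on_def by blast
      obtain S2 D2 where S2: "finite S2" and D2: "\<And>x. x \<in> {x0..b} - S2 \<Longrightarrow> (chi has_vector_derivative D2 x) (at x)"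
        using pwc[of x0 b] unfolding piecewise_C1_differentiable_on_def C1_differentiable_on_def by blast
      have mup: "mono_on {..x0} chi" using hump_up by (simp add: chieq)
      have mdown: "mono_on {x0..} (\<lambda>x. - chi x)" using hump_down unfolding chieq monotone_on_def by auto
      have L1: "ln (Fn a + sqrt ((Fn a)\<^sup>2 - 4*W0\<^sup>2 + e)) + 1 * ln (k + chi a) + 2 * integral {a..a} chi
          \<le> ln (Fn x0 + sqrt ((Fn x0)\<^sup>2 - 4*W0\<^sup>2 + e)) + 1 * ln (k + chi x0) + 2 * integral {a..x0} chi"
        unfolding Fn_def
      proof (rule core_mono[OF k e ab(1) _ dX dY dX1 dY1 Wx chic chipos S1])
        fix x assume x: "x \<in> {a<..<x0} - S1"
        show d: "(chi has_real_derivative D1 x) (at x)"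
          using D1[of x] x by (auto simp: has_real_derivative_iff_has_vector_derivative)
        show "1 * D1 x \<ge> 0" using mono_on_imp_deriv_nonneg[OF mup d] x by auto
      qed simp
      have L2: "ln (Fn x0 + sqrt ((Fn x0)\<^sup>2 - 4*W0\<^sup>2 + e)) + (-1) * ln (k + chi x0) + 2 * integral {x0..x0} chi
          \<le> ln (Fn b + sqrt ((Fn b)\<^sup>2 - 4*W0\<^sup>2 + e)) + (-1) * ln (k + chi b) + 2 * integral {x0..b} chi"
        unfolding Fn_def
      proof (rule core_mono[OF k e ab(2) _ dX dY dX1 dY1 Wx chic chipos S2])
        fix x assume x: "x \<in> {x0<..<b} - S2"
        show d: "(chi has_real_derivative D2 x) (at x)"
          using D2[of x] x by (auto simp: has_real_derivative_iff_has_vector_derivative)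
        have "((\<lambda>x. - chi x) has_real_derivative - D2 x) (at x)" using d by (rule DERIV_minus)
        then show "(-1) * D2 x \<ge> 0" using mono_on_imp_deriv_nonneg[OF mdown] x by fastforce
      qed simp
      have comb: "integral {a..x0} chi + integral {x0..b} chi = integral {a..b} chi"
        by (rule Henstock_Kurzweil_Integration.integral_combine[OF ab])
           (rule integrable_continuous_real, rule continuous_on_subset[OF chic], auto)
      have "integral {a..b} chi \<le> J" using ab by (intro intJ) auto
      then show ?thesis using L1 L2 comb by simp
    qed
    have final: "(1 + sqrt R)\<^sup>2 \<le> Tt * exp (2 * (chi x0 / k + J))"
    proof -
      have H: "ln (2*k*(1+R) + sqrt ((2*k*(1+R))\<^sup>2 - 4*W0\<^sup>2 + e)) + ln k
         \<le> ln (2*k*Tt + sqrt ((2*k*Tt)\<^sup>2 - 4*W0\<^sup>2 + e)) - ln k + 2 * ln (k + chi x0) + 2 * J"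
        if e: "e > 0" for e
      proof -
        define C where "C = 2 * ln (k + chi x0) + 2 * J"
        have em: "(2*k*(1+R))\<^sup>2 - 4*W0\<^sup>2 = 16*k\<^sup>2*R" unfolding W0B by (simp add: power2_eq_square algebra_simps)
        have ep: "(2*k*Tt)\<^sup>2 - 4*W0\<^sup>2 = 0" unfolding W0T by (simp add: power2_eq_square algebra_simps)
        have Pm0: "2*k*(1+R) + sqrt ((2*k*(1+R))\<^sup>2 - 4*W0\<^sup>2 + e) > 0"
          unfolding em using k R0 e by (intro add_pos_nonneg) auto
        have Pp0: "2*k*Tt + sqrt ((2*k*Tt)\<^sup>2 - 4*W0\<^sup>2 + e) > 0"
          unfolding ep using k Tt0 e by (intro add_nonneg_pos) auto
        have limA: "((\<lambda>a. ln (Fn a + sqrt ((Fn a)\<^sup>2 - 4*W0\<^sup>2 + e)) + ln (k + chi a)) \<longlongrightarrow>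
            ln (2*k*(1+R) + sqrt ((2*k*(1+R))\<^sup>2 - 4*W0\<^sup>2 + e)) + ln k) at_bot"
          by (intro tendsto_intros FB hbot) (use Pm0 k in auto)
        have step1: "ln (2*k*(1+R) + sqrt ((2*k*(1+R))\<^sup>2 - 4*W0\<^sup>2 + e)) + ln k
            \<le> ln (Fn b + sqrt ((Fn b)\<^sup>2 - 4*W0\<^sup>2 + e)) - ln (k + chi b) + C" if b: "x0 \<le> b" for b
        proof (rule tendsto_upperbound[OF limA])
          show "\<forall>\<^sub>F a in at_bot. ln (Fn a + sqrt ((Fn a)\<^sup>2 - 4*W0\<^sup>2 + e)) + ln (k + chi a)
              \<le> ln (Fn b + sqrt ((Fn b)\<^sup>2 - 4*W0\<^sup>2 + e)) - ln (k + chi b) + C"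
            using eventually_le_at_bot[of x0]
          proof eventually_elim
            case (elim a)
            from key[OF e elim b] show ?case by (simp add: C_def add.assoc)
          qed
        qed simp
        have limB: "((\<lambda>b. ln (Fn b + sqrt ((Fn b)\<^sup>2 - 4*W0\<^sup>2 + e)) - ln (k + chi b) + C) \<longlongrightarrow>
            ln (2*k*Tt + sqrt ((2*k*Tt)\<^sup>2 - 4*W0\<^sup>2 + e)) - ln k + C) at_top"
          by (intro tendsto_intros FT htop) (use Pp0 k in auto)
        have "ln (2*k*(1+R) + sqrt ((2*k*(1+R))\<^sup>2 - 4*W0\<^sup>2 + e)) + ln k
            \<le> ln (2*k*Tt + sqrt ((2*k*Tt)\<^sup>2 - 4*W0\<^sup>2 + e)) - ln k + C"
        proof (rule tendsto_lowerbound[OF limB])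
          show "\<forall>\<^sub>F b in at_top. ln (2*k*(1+R) + sqrt ((2*k*(1+R))\<^sup>2 - 4*W0\<^sup>2 + e)) + ln k
              \<le> ln (Fn b + sqrt ((Fn b)\<^sup>2 - 4*W0\<^sup>2 + e)) - ln (k + chi b) + C"
            using eventually_ge_at_top[of x0] by eventually_elim (rule step1)
        qed simp
        then show ?thesis by (simp add: C_def)
      qed
      have "k \<le> k + chi x0" using chipos[of x0] by simp
      from final_ineq[OF k R0 Tt0 W0T W0B this H] show ?thesis by simp
    qed
    have "(sech (chi x0 / k + J))\<^sup>2 \<le> Tt"
      by (rule final_alg[OF _ _ final]) (use RT R0 in auto)
    then show ?thesis unfolding Let_def Ieq rhs I_def[symmetric] Seq SUPeq J_def k_def using False by simp
  qed
qed


end
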